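(* Let $m$ be a positive integer with $\omega(m)\geq 149$. Then $W(m)<m^{1/8}$.
   Context: For a positive integer $m$, $\omega(m)$ is the number of distinct prime divisors of $m$ and $W(m)=2^{\omega(m)}$. *)

theory Defs
  imports Complex_Main "HOL-Computational_Algebra.Primes"
begin

definition omega :: "nat \<Rightarrow> nat" where
  "omega m = card (prime_factors m)"

definition W :: "nat \<Rightarrow> nat" where
  "W m = 2 ^ omega m"

end

theory Submission
  imports Defs
begin

definition isq :: "nat \<Rightarrow> bool" where
  "isq n = ((n = 2 \<or> n mod 2 \<noteq> 0) \<and> (n = 3 \<or> n mod 3 \<noteq> 0) \<and> (n = 5 \<or> n mod 5 \<noteq> 0) \<and> (n = 7 \<or> n mod 7 \<noteq> 0) \<and> (n = 11 \<or> n mod 11 \<noteq> 0) \<and> (n = 13 \<or> n mod 13 \<noteq> 0) \<and> (n = 17 \<or> n mod 17 \<noteq> 0) \<and> (n = 19 \<or> n mod 19 \<noteq> 0) \<and> (n = 23 \<or> n mod 23 \<noteq> 0) \<and> (n = 29 \<or> n mod 29 \<noteq> 0))"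

definition LL :: "nat list" where
  "LL = [2, 3, 5, 7, 11, 13, 17, 19, 23, 29, 31, 37, 41, 43, 47, 53, 59, 61, 67, 71, 73, 79, 83, 89, 97, 101, 103, 107, 109, 113, 127, 131, 137, 139, 149, 151, 157, 163, 167, 173, 179, 181, 191, 193, 197, 199, 211, 223, 227, 229, 233, 239, 241, 251, 257, 263, 269, 271, 277, 281, 283, 293, 307, 311, 313, 317, 331, 337, 347, 349, 353, 359, 367, 373, 379, 383, 389, 397, 401, 409, 419, 421, 431, 433, 439, 443, 449, 457, 461, 463, 467, 479, 487, 491, 499, 503, 509, 521, 523, 541, 547, 557, 563, 569, 571, 577, 587, 593, 599, 601, 607, 613, 617, 619, 631, 641, 643, 647, 653, 659, 661, 673, 677, 683, 691, 701, 709, 719, 727, 733, 739, 743, 751, 757, 761, 769, 773, 787, 797, 809, 811, 821, 823, 827, 829, 839, 853, 857]"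

lemma chunk0: "filter isq [2..<100] = [2, 3, 5, 7, 11, 13, 17, 19, 23, 29, 31, 37, 41, 43, 47, 53, 59, 61, 67, 71, 73, 79, 83, 89, 97]"
  by (simp add: isq_def upt_rec)

lemma chunk1: "filter isq [100..<200] = [101, 103, 107, 109, 113, 127, 131, 137, 139, 149, 151, 157, 163, 167, 173, 179, 181, 191, 193, 197, 199]"
  by (simp add: isq_def upt_rec)

lemma chunk2: "filter isq [200..<300] = [211, 223, 227, 229, 233, 239, 241, 251, 257, 263, 269, 271, 277, 281, 283, 293]"
  by (simp add: isq_def upt_rec)

lemma chunk3: "filter isq [300..<400] = [307, 311, 313, 317, 331, 337, 347, 349, 353, 359, 367, 373, 379, 383, 389, 397]"
  by (simp add: isq_def upt_rec)

lemma chunk4: "filter isq [400..<500] = [401, 409, 419, 421, 431, 433, 439, 443, 449, 457, 461, 463, 467, 479, 487, 491, 499]"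
  by (simp add: isq_def upt_rec)

lemma chunk5: "filter isq [500..<600] = [503, 509, 521, 523, 541, 547, 557, 563, 569, 571, 577, 587, 593, 599]"
  by (simp add: isq_def upt_rec)

lemma chunk6: "filter isq [600..<700] = [601, 607, 613, 617, 619, 631, 641, 643, 647, 653, 659, 661, 673, 677, 683, 691]"
  by (simp add: isq_def upt_rec)

lemma chunk7: "filter isq [700..<800] = [701, 709, 719, 727, 733, 739, 743, 751, 757, 761, 769, 773, 787, 797]"
  by (simp add: isq_def upt_rec)

lemma chunk8: "filter isq [800..<859] = [809, 811, 821, 823, 827, 829, 839, 853, 857]"
  by (simp add: isq_def upt_rec)

lemma upt_app: "i \<le> j \<Longrightarrow> j \<le> k \<Longrightarrow> [i..<j] @ [j..<k] = [i..<k]"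
  by (metis le_add_diff_inverse upt_add_eq_append)

lemma upt_split: "[2..<859] = [2..<100] @ [100..<200] @ [200..<300] @ [300..<400] @ [400..<500] @ [500..<600] @ [600..<700] @ [700..<800] @ [800..<859]"
  by (simp add: upt_app)

lemma filter_all: "filter isq [2..<859] = LL"
  unfolding upt_split filter_append chunk0 chunk1 chunk2 chunk3 chunk4 chunk5 chunk6 chunk7 chunk8 LL_def by simp


lemma prime_isq:
  assumes "prime (p::nat)"
  shows "isq p"
proof -
  have H: "\<And>d. d \<in> {2,3,5,7,11,13,17,19,23,29::nat} \<Longrightarrow> p = d \<or> p mod d \<noteq> 0"
  proof -
    fix d :: nat assume d: "d \<in> {2,3,5,7,11,13,17,19,23,29}"
    show "p = d \<or> p mod d \<noteq> 0"
    proof (rule ccontr)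
      assume "\<not> (p = d \<or> p mod d \<noteq> 0)"
      hence "d dvd p" "d \<noteq> p" by auto
      moreover have "d \<noteq> 1" using d by auto
      moreover have "\<forall>m. m dvd p \<longrightarrow> m = 1 \<or> m = p" using assms by (simp add: prime_nat_iff)
      ultimately show False by blast
    qed
  qed
  show ?thesis unfolding isq_def by (intro conjI H) simp_all
qed

lemma prime_in_LL:
  assumes "prime (p::nat)" "p < 859"
  shows "p \<in> set LL"
proof -
  have "p \<ge> 2" using assms(1) prime_ge_2_nat by blast
  hence m1: "p \<in> set [2..<859]" unfolding set_upt using assms(2) by simp
  have "p \<in> set (filter isq [2..<859])"
    unfolding set_filter using m1 prime_isq[OF assms(1)] by blast
  thus ?thesis by (simp only: filter_all)
qed

lemma pchunk0: "(559238::nat) * 2 ^ 40 \<le> prod_list [2, 3, 5, 7, 11, 13, 17, 19, 23, 29, 31, 37, 41, 43, 47]"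
  by simp

lemma pchunk1: "(680374::nat) * 2 ^ 76 \<le> prod_list [53, 59, 61, 67, 71, 73, 79, 83, 89, 97, 101, 103, 107, 109, 113]"
  by simp

lemma pchunk2: "(1001641::nat) * 2 ^ 90 \<le> prod_list [127, 131, 137, 139, 149, 151, 157, 163, 167, 173, 179, 181, 191, 193, 197]"
  by simp

lemma pchunk3: "(992140::nat) * 2 ^ 99 \<le> prod_list [199, 211, 223, 227, 229, 233, 239, 241, 251, 257, 263, 269, 271, 277, 281]"
  by simp

lemma pchunk4: "(859949::nat) * 2 ^ 106 \<le> prod_list [283, 293, 307, 311, 313, 317, 331, 337, 347, 349, 353, 359, 367, 373, 379]"
  by simp

lemma pchunk5: "(1047733::nat) * 2 ^ 111 \<le> prod_list [383, 389, 397, 401, 409, 419, 421, 431, 433, 439, 443, 449, 457, 461, 463]"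
  by simp

lemma pchunk6: "(675780::nat) * 2 ^ 116 \<le> prod_list [467, 479, 487, 491, 499, 503, 509, 521, 523, 541, 547, 557, 563, 569, 571]"
  by simp

lemma pchunk7: "(559753::nat) * 2 ^ 120 \<le> prod_list [577, 587, 593, 599, 601, 607, 613, 617, 619, 631, 641, 643, 647, 653, 659]"
  by simp

lemma pchunk8: "(604643::nat) * 2 ^ 123 \<le> prod_list [661, 673, 677, 683, 691, 701, 709, 719, 727, 733, 739, 743, 751, 757, 761]"
  by simp

lemma pchunk9: "(856689::nat) * 2 ^ 106 \<le> prod_list [769, 773, 787, 797, 809, 811, 821, 823, 827, 829, 839, 853, 857]"
  by simp

lemma pA: "(2::nat) ^ 205 < 859 * (559238 * 680374 * 1001641 * 992140 * 859949 * 1047733 * 675780 * 559753 * 604643 * 856689)" by simp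
lemma pB: "(256::nat) ^ 149 = 2 ^ 205 * 2 ^ (40 + 76 + 90 + 99 + 106 + 111 + 116 + 120 + 123 + 106)"
proof -
  have "(256::nat) ^ 149 = (2 ^ 8) ^ 149" by simp
  also have "\<dots> = 2 ^ (205 + (40 + 76 + 90 + 99 + 106 + 111 + 116 + 120 + 123 + 106))" by (simp only: power_mult[symmetric]) simp
  finally show ?thesis by (simp only: power_add)
qed
lemma pC: "((559238::nat) * 2 ^ 40) * (680374 * 2 ^ 76) * (1001641 * 2 ^ 90) * (992140 * 2 ^ 99) * (859949 * 2 ^ 106) * (1047733 * 2 ^ 111) * (675780 * 2 ^ 116) * (559753 * 2 ^ 120) * (604643 * 2 ^ 123) * (856689 * 2 ^ 106) = (559238 * 680374 * 1001641 * 992140 * 859949 * 1047733 * 675780 * 559753 * 604643 * 856689) * 2 ^ (40 + 76 + 90 + 99 + 106 + 111 + 116 + 120 + 123 + 106)"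
  by (simp only: power_add mult.assoc mult.commute mult.left_commute)
lemma pD: "((559238::nat) * 2 ^ 40) * (680374 * 2 ^ 76) * (1001641 * 2 ^ 90) * (992140 * 2 ^ 99) * (859949 * 2 ^ 106) * (1047733 * 2 ^ 111) * (675780 * 2 ^ 116) * (559753 * 2 ^ 120) * (604643 * 2 ^ 123) * (856689 * 2 ^ 106) \<le> prod_list [2, 3, 5, 7, 11, 13, 17, 19, 23, 29, 31, 37, 41, 43, 47] * prod_list [53, 59, 61, 67, 71, 73, 79, 83, 89, 97, 101, 103, 107, 109, 113] * prod_list [127, 131, 137, 139, 149, 151, 157, 163, 167, 173, 179, 181, 191, 193, 197] * prod_list [199, 211, 223, 227, 229, 233, 239, 241, 251, 257, 263, 269, 271, 277, 281] * prod_list [283, 293, 307, 311, 313, 317, 331, 337, 347, 349, 353, 359, 367, 373, 379] * prod_list [383, 389, 397, 401, 409, 419, 421, 431, 433, 439, 443, 449, 457, 461, 463] * prod_list [467, 479, 487, 491, 499, 503, 509, 521, 523, 541, 547, 557, 563, 569, 571] * prod_list [577, 587, 593, 599, 601, 607, 613, 617, 619, 631, 641, 643, 647, 653, 659] * prod_list [661, 673, 677, 683, 691, 701, 709, 719, 727, 733, 739, 743, 751, 757, 761] * prod_list [769, 773, 787, 797, 809, 811, 821, 823, 827, 829, 839, 853, 857]"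
  by (intro mult_le_mono pchunk0 pchunk1 pchunk2 pchunk3 pchunk4 pchunk5 pchunk6 pchunk7 pchunk8 pchunk9)

lemma LL_split: "LL = [2, 3, 5, 7, 11, 13, 17, 19, 23, 29, 31, 37, 41, 43, 47] @ [53, 59, 61, 67, 71, 73, 79, 83, 89, 97, 101, 103, 107, 109, 113] @ [127, 131, 137, 139, 149, 151, 157, 163, 167, 173, 179, 181, 191, 193, 197] @ [199, 211, 223, 227, 229, 233, 239, 241, 251, 257, 263, 269, 271, 277, 281] @ [283, 293, 307, 311, 313, 317, 331, 337, 347, 349, 353, 359, 367, 373, 379] @ [383, 389, 397, 401, 409, 419, 421, 431, 433, 439, 443, 449, 457, 461, 463] @ [467, 479, 487, 491, 499, 503, 509, 521, 523, 541, 547, 557, 563, 569, 571] @ [577, 587, 593, 599, 601, 607, 613, 617, 619, 631, 641, 643, 647, 653, 659] @ [661, 673, 677, 683, 691, 701, 709, 719, 727, 733, 739, 743, 751, 757, 761] @ [769, 773, 787, 797, 809, 811, 821, 823, 827, 829, 839, 853, 857]"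
  unfolding LL_def by simp

lemma LL_prod: "(256::nat)^149 < 859 * prod_list LL"
proof -
  have "prod_list LL = prod_list [2, 3, 5, 7, 11, 13, 17, 19, 23, 29, 31, 37, 41, 43, 47] * prod_list [53, 59, 61, 67, 71, 73, 79, 83, 89, 97, 101, 103, 107, 109, 113] * prod_list [127, 131, 137, 139, 149, 151, 157, 163, 167, 173, 179, 181, 191, 193, 197] * prod_list [199, 211, 223, 227, 229, 233, 239, 241, 251, 257, 263, 269, 271, 277, 281] * prod_list [283, 293, 307, 311, 313, 317, 331, 337, 347, 349, 353, 359, 367, 373, 379] * prod_list [383, 389, 397, 401, 409, 419, 421, 431, 433, 439, 443, 449, 457, 461, 463] * prod_list [467, 479, 487, 491, 499, 503, 509, 521, 523, 541, 547, 557, 563, 569, 571] * prod_list [577, 587, 593, 599, 601, 607, 613, 617, 619, 631, 641, 643, 647, 653, 659] * prod_list [661, 673, 677, 683, 691, 701, 709, 719, 727, 733, 739, 743, 751, 757, 761] * prod_list [769, 773, 787, 797, 809, 811, 821, 823, 827, 829, 839, 853, 857]"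
    by (simp only: LL_split prod_list.append mult.assoc)
  hence e: "prod_list LL = prod_list [2, 3, 5, 7, 11, 13, 17, 19, 23, 29, 31, 37, 41, 43, 47] * prod_list [53, 59, 61, 67, 71, 73, 79, 83, 89, 97, 101, 103, 107, 109, 113] * prod_list [127, 131, 137, 139, 149, 151, 157, 163, 167, 173, 179, 181, 191, 193, 197] * prod_list [199, 211, 223, 227, 229, 233, 239, 241, 251, 257, 263, 269, 271, 277, 281] * prod_list [283, 293, 307, 311, 313, 317, 331, 337, 347, 349, 353, 359, 367, 373, 379] * prod_list [383, 389, 397, 401, 409, 419, 421, 431, 433, 439, 443, 449, 457, 461, 463] * prod_list [467, 479, 487, 491, 499, 503, 509, 521, 523, 541, 547, 557, 563, 569, 571] * prod_list [577, 587, 593, 599, 601, 607, 613, 617, 619, 631, 641, 643, 647, 653, 659] * prod_list [661, 673, 677, 683, 691, 701, 709, 719, 727, 733, 739, 743, 751, 757, 761] * prod_list [769, 773, 787, 797, 809, 811, 821, 823, 827, 829, 839, 853, 857]"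
    by (simp only: mult.assoc)
  have "(256::nat)^149 = 2 ^ 205 * 2 ^ (40 + 76 + 90 + 99 + 106 + 111 + 116 + 120 + 123 + 106)" by (rule pB)
  also have "\<dots> < 859 * (559238 * 680374 * 1001641 * 992140 * 859949 * 1047733 * 675780 * 559753 * 604643 * 856689) * 2 ^ (40 + 76 + 90 + 99 + 106 + 111 + 116 + 120 + 123 + 106)"
    by (rule mult_strict_right_mono[OF pA], rule zero_less_power) simp
  also have "\<dots> \<le> 859 * prod_list LL"
  proof -
    have "(559238 * 680374 * 1001641 * 992140 * 859949 * 1047733 * 675780 * 559753 * 604643 * 856689) * 2 ^ (40 + 76 + 90 + 99 + 106 + 111 + 116 + 120 + 123 + 106) \<le> prod_list LL"
      unfolding e pC[symmetric] by (rule pD)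
    from mult_le_mono2[OF this, of 859] show ?thesis by (simp only: mult.assoc)
  qed
  finally show ?thesis .
qed

lemma filt_bound: "q \<in> set (filter P [a..<b]) \<Longrightarrow> 0 < a \<Longrightarrow> 0 < q \<and> q < b"
  by auto

lemma LL_facts: "distinct LL" "length LL = 148" "(256::nat)^149 < 859 * prod_list LL"
  "\<forall>q\<in>set LL. 0 < q \<and> q < 859"
proof -
  show "distinct LL" by (simp only: filter_all[symmetric] distinct_filter distinct_upt)
  show "length LL = 148" unfolding LL_def by simp
  show "(256::nat)^149 < 859 * prod_list LL" by (rule LL_prod)
  show "\<forall>q\<in>set LL. 0 < q \<and> q < 859"
  proof
    fix q assume "q \<in> set LL"
    hence "q \<in> set (filter isq [2..<859])" by (simp only: filter_all)
    thus "0 < q \<and> q < 859" using filt_bound[of q isq 2 859] by (simp only: zero_less_numeral simp_thms)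
  qed
qed

lemma main_bound:
  fixes P :: "nat set"
  assumes fin: "finite P" and pr: "\<forall>p\<in>P. prime p" and k: "card P \<ge> 149"
  shows "(256::nat) ^ card P < \<Prod>P"
proof -
  define T :: nat where "T = 859"
  define Q where "Q = set LL"
  define A where "A = P \<inter> {..<T}"
  have finQ: "finite Q" unfolding Q_def by simp
  have cardQ: "card Q = 148" unfolding Q_def using LL_facts distinct_card by metis
  have prodQ: "\<Prod>Q = prod_list LL" unfolding Q_def using prod.distinct_set_conv_list[OF LL_facts(1), of "\<lambda>x. x"] by simp
  have Qb: "\<forall>q\<in>Q. 0 < q \<and> q < T" unfolding Q_def T_def using LL_facts(4) by simp
  have AQ: "A \<subseteq> Q" unfolding A_def Q_def T_def using pr prime_in_LL by auto
  have finA: "finite A" using AQ finQ finite_subset by blast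
  have Ppos: "\<forall>p\<in>P. 0 < p" using pr prime_gt_0_nat by blast
  have cA: "card A \<le> 148" using AQ finQ cardQ card_mono by metis
  have AP: "A \<subseteq> P" unfolding A_def by auto
  have cQA: "card (Q - A) = 148 - card A" using AQ finA cardQ by (simp add: card_Diff_subset)
  have cPA: "card (P - A) = card P - card A" using AP finA by (simp add: card_Diff_subset)
  have e1: "\<Prod>Q = \<Prod>A * \<Prod>(Q - A)" using AQ finQ by (metis prod.subset_diff mult.commute)
  have "\<Prod>(Q - A) \<le> (\<Prod>q\<in>Q - A. T)"
    by (rule prod_mono) (use Qb in auto)
  hence b1: "\<Prod>Q \<le> \<Prod>A * T ^ (148 - card A)" using e1 cQA by simp
  have e2: "\<Prod>P = \<Prod>A * \<Prod>(P - A)" using AP fin by (metis prod.subset_diff mult.commute)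
  have "(\<Prod>q\<in>P - A. T) \<le> \<Prod>(P - A)"
    by (rule prod_mono) (auto simp: A_def)
  hence b2: "\<Prod>A * T ^ (card P - card A) \<le> \<Prod>P" using e2 cPA by simp
  have split: "T ^ (card P - card A) = T ^ (card P - 148) * T ^ (148 - card A)"
    using cA k by (simp add: power_add[symmetric])
  have "\<Prod>Q * T ^ (card P - 148) \<le> \<Prod>A * T ^ (148 - card A) * T ^ (card P - 148)"
    by (rule mult_le_mono1[OF b1])
  also have "\<dots> = \<Prod>A * T ^ (card P - card A)" using split by (simp add: ac_simps)
  also have "\<dots> \<le> \<Prod>P" using b2 .
  finally have b3: "\<Prod>Q * T ^ (card P - 148) \<le> \<Prod>P" .
  have "(256::nat) ^ card P = 256^149 * 256 ^ (card P - 149)"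
    using k by (simp only: power_add[symmetric] le_add_diff_inverse)
  also have "\<dots> < (859 * \<Prod>Q) * 859 ^ (card P - 149)"
  proof (rule mult_less_le_imp_less)
    show "(256::nat)^149 < 859 * \<Prod>Q" using LL_facts(3) prodQ by (simp only:)
    show "(256::nat) ^ (card P - 149) \<le> 859 ^ (card P - 149)" by (rule power_mono) auto
  qed (simp_all only: le0 zero_less_power zero_less_numeral)
  also have "\<dots> = \<Prod>Q * T ^ (card P - 148)"
  proof -
    have "card P - 148 = Suc (card P - 149)" using k by simp
    thus ?thesis unfolding T_def by (simp only: power_Suc mult_ac)
  qed
  finally have "(256::nat) ^ card P < \<Prod>Q * T ^ (card P - 148)" .
  thus ?thesis using b3 by (rule less_le_trans)
qed

theorem lemma5p1:
  fixes m :: nat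
  assumes "m > 0" and "omega m \<ge> 149"
  shows "real (W m) < real m powr (1/8)"
proof -
  define P where "P = prime_factors m"
  have fP: "finite P" unfolding P_def by simp
  have pP: "\<forall>p\<in>P. prime p" unfolding P_def by (auto intro: in_prime_factors_imp_prime)
  have kP: "card P \<ge> 149" using assms(2) unfolding P_def omega_def .
  have b: "(256::nat) ^ card P < \<Prod>P"
    by (rule main_bound[OF fP pP kP])
  have "\<Prod>P \<le> (\<Prod>p\<in>P. p ^ multiplicity p m)"
  proof (rule prod_mono)
    fix p assume pin: "p \<in> P"
    hence pr: "prime p" using pP by blast
    have mu: "multiplicity p m > 0" using pin assms(1) unfolding P_def
      by (simp add: prime_factors_multiplicity)
    have "p ^ 1 \<le> p ^ multiplicity p m"
      by (rule power_increasing) (use mu prime_gt_0_nat[OF pr] in linarith)+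
    thus "0 \<le> p \<and> p \<le> p ^ multiplicity p m" by simp
  qed
  also have "\<dots> = m" using assms(1) unfolding P_def by (rule prime_factorization_nat[symmetric])
  finally have "\<Prod>P \<le> m" .
  with b have lt: "(256::nat) ^ card P < m" by (rule less_le_trans)
  define k where "k = card P"
  have e1: "real ((256::nat) ^ k) = (2::real) powr (real (8 * k))"
  proof -
    have "(2::real) powr (real (8 * k)) = 2 ^ (8 * k)" by (rule powr_realpow) simp
    also have "\<dots> = 256 ^ k" by (simp add: power_mult)
    finally show ?thesis by simp
  qed
  have e2: "real ((256::nat) ^ k) powr (1/8) = (2::real) ^ k"
    unfolding e1 by (simp add: powr_powr powr_realpow)
  have "real (W m) = (2::real) ^ k" unfolding W_def omega_def P_def k_def by simp
  also have "\<dots> = real ((256::nat) ^ k) powr (1/8)" using e2 by simp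
  also have "\<dots> < real m powr (1/8)"
    using lt unfolding k_def by (intro powr_less_mono2) auto
  finally show ?thesis .
qed

end
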